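(* Let $A$ be a graded $R$-algebra and $M$ an $A$-bimodule such that $M$ is free as a left $A$-module on a generating graded $R$-module $X$, i.e. $M\cong A\otimes X$ as left $A$-modules, and the right $A$-action on $M$ satisfies $(a\otimes x)\cdot b-(-1)^{mn}ab\otimes x\in A\otimes X_{<m}$ for all $a\in A$, $x\in X_m$, $b\in A_n$ and $m,n\ge0$. Then $M$ is free as a right $A$-module.
   Context: $R$ is a commutative ring; gradings are nonnegative; $X_{<m}=\bigoplus_{j<m}X_j$; signs follow the Koszul convention. *)

theory Defs
  imports Main
begin

definition graded_dsum :: "(nat \<Rightarrow> 'a::ab_group_add set) \<Rightarrow> bool" where
  "graded_dsum G \<longleftrightarrow>
     (\<forall>n. 0 \<in> G n \<and> (\<forall>x\<in>G n. \<forall>y\<in>G n. x + y \<in> G n \<and> - x \<in> G n)) \<and>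
     (\<forall>v. \<exists>!f. (\<forall>n. f n \<in> G n) \<and> finite {n. f n \<noteq> 0} \<and> v = sum f {n. f n \<noteq> 0})"

text \<open>A graded R-algebra: a ring A with a central ring homomorphism alg : R \<rightarrow> A
  (so r \<cdot> a = alg r * a), graded by R-submodules GA n with 1 in degree 0 and
  GA m * GA n \<subseteq> GA (m+n).\<close>
definition graded_R_algebra :: "('r::comm_ring_1 \<Rightarrow> 'a::ring_1) \<Rightarrow> (nat \<Rightarrow> 'a set) \<Rightarrow> bool" where
  "graded_R_algebra alg GA \<longleftrightarrow>
     alg 1 = 1 \<and> (\<forall>r s. alg (r + s) = alg r + alg s) \<and> (\<forall>r s. alg (r * s) = alg r * alg s) \<and>
     (\<forall>r a. alg r * a = a * alg r) \<and>
     graded_dsum GA \<and> (\<forall>n r a. a \<in> GA n \<longrightarrow> alg r * a \<in> GA n) \<and>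
     1 \<in> GA 0 \<and> (\<forall>m n a b. a \<in> GA m \<longrightarrow> b \<in> GA n \<longrightarrow> a * b \<in> GA (m + n))"

definition graded_bimodule ::
  "('r::comm_ring_1 \<Rightarrow> 'a::ring_1) \<Rightarrow> (nat \<Rightarrow> 'a set) \<Rightarrow> ('a \<Rightarrow> 'm::ab_group_add \<Rightarrow> 'm)
     \<Rightarrow> ('m \<Rightarrow> 'a \<Rightarrow> 'm) \<Rightarrow> (nat \<Rightarrow> 'm set) \<Rightarrow> bool" where
  "graded_bimodule alg GA lM rM GM \<longleftrightarrow>
     (\<forall>a m m'. lM a (m + m') = lM a m + lM a m') \<and>
     (\<forall>a a' m. lM (a + a') m = lM a m + lM a' m) \<and>
     (\<forall>a a' m. lM (a * a') m = lM a (lM a' m)) \<and>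
     (\<forall>m. lM 1 m = m) \<and>
     (\<forall>m m' b. rM (m + m') b = rM m b + rM m' b) \<and>
     (\<forall>m b b'. rM m (b + b') = rM m b + rM m b') \<and>
     (\<forall>m b b'. rM m (b * b') = rM (rM m b) b') \<and>
     (\<forall>m. rM m 1 = m) \<and>
     (\<forall>a m b. rM (lM a m) b = lM a (rM m b)) \<and>
     (\<forall>r m. lM (alg r) m = rM m (alg r)) \<and>
     graded_dsum GM \<and>
     (\<forall>i k a m. a \<in> GA i \<longrightarrow> m \<in> GM k \<longrightarrow> lM a m \<in> GM (i + k)) \<and>
     (\<forall>k n m b. m \<in> GM k \<longrightarrow> b \<in> GA n \<longrightarrow> rM m b \<in> GM (k + n))"

definition graded_submod ::
  "('r::comm_ring_1 \<Rightarrow> 'a::ring_1) \<Rightarrow> ('a \<Rightarrow> 'm::ab_group_add \<Rightarrow> 'm) \<Rightarrow> (nat \<Rightarrow> 'm set)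
     \<Rightarrow> (nat \<Rightarrow> 'm set) \<Rightarrow> bool" where
  "graded_submod alg lM GM X \<longleftrightarrow>
     (\<forall>n. X n \<subseteq> GM n \<and> 0 \<in> X n \<and> (\<forall>x\<in>X n. \<forall>y\<in>X n. x + y \<in> X n) \<and>
          (\<forall>r. \<forall>x\<in>X n. lM (alg r) x \<in> X n))"

text \<open>hsums X S = \<Oplus>_{j \<in> S} X j (inside M); X_{<m} = hsums X {..<m}.\<close>
definition hsums :: "(nat \<Rightarrow> 'm::ab_group_add set) \<Rightarrow> nat set \<Rightarrow> 'm set" where
  "hsums X S = {sum_list xs | xs. set xs \<subseteq> (\<Union>n\<in>S. X n)}"

definition delta :: "'b \<Rightarrow> 'b \<Rightarrow> int" where
  "delta u = (\<lambda>v. if v = u then 1 else 0)"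

text \<open>The subgroup of the free abelian group Z[S \<times> T] generated by the defining relations
  of S \<otimes>_R T (S a right R-module via s1, T a left R-module via s2).\<close>
inductive_set tensor_rels ::
  "'s::plus set \<Rightarrow> 't::plus set \<Rightarrow> ('r \<Rightarrow> 's \<Rightarrow> 's) \<Rightarrow> ('r \<Rightarrow> 't \<Rightarrow> 't) \<Rightarrow> ('s \<times> 't \<Rightarrow> int) set"
  for S T s1 s2 where
  zero: "(\<lambda>v. 0) \<in> tensor_rels S T s1 s2"
| add_left: "a \<in> S \<Longrightarrow> a' \<in> S \<Longrightarrow> x \<in> T \<Longrightarrow>
     (\<lambda>v. delta (a + a', x) v - delta (a, x) v - delta (a', x) v) \<in> tensor_rels S T s1 s2"
| add_right: "a \<in> S \<Longrightarrow> x \<in> T \<Longrightarrow> x' \<in> T \<Longrightarrow>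
     (\<lambda>v. delta (a, x + x') v - delta (a, x) v - delta (a, x') v) \<in> tensor_rels S T s1 s2"
| balanced: "a \<in> S \<Longrightarrow> x \<in> T \<Longrightarrow>
     (\<lambda>v. delta (s1 r a, x) v - delta (a, s2 r x) v) \<in> tensor_rels S T s1 s2"
| diff: "p \<in> tensor_rels S T s1 s2 \<Longrightarrow> q \<in> tensor_rels S T s1 s2 \<Longrightarrow>
     (\<lambda>v. p v - q v) \<in> tensor_rels S T s1 s2"

text \<open>A list of pairs represents the element \<Sum> a_i \<otimes> x_i; it is zero in S \<otimes>_R T iff
  its formal sum lies in the relation subgroup.\<close>
definition tensor_zero ::
  "'s::plus set \<Rightarrow> 't::plus set \<Rightarrow> ('r \<Rightarrow> 's \<Rightarrow> 's) \<Rightarrow> ('r \<Rightarrow> 't \<Rightarrow> 't) \<Rightarrow> ('s \<times> 't) list \<Rightarrow> bool" where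
  "tensor_zero S T s1 s2 p \<longleftrightarrow> (\<lambda>v. int (count_list p v)) \<in> tensor_rels S T s1 s2"

text \<open>The map S \<otimes>_R T \<rightarrow> M, s \<otimes> t \<mapsto> \<mu> s t, is a bijection (surjective, trivial kernel).\<close>
definition tensor_mult_bij ::
  "'s::plus set \<Rightarrow> 't::plus set \<Rightarrow> ('r \<Rightarrow> 's \<Rightarrow> 's) \<Rightarrow> ('r \<Rightarrow> 't \<Rightarrow> 't)
     \<Rightarrow> ('s \<Rightarrow> 't \<Rightarrow> 'm::monoid_add) \<Rightarrow> bool" where
  "tensor_mult_bij S T s1 s2 \<mu> \<longleftrightarrow>
     (\<forall>v. \<exists>p. set p \<subseteq> S \<times> T \<and> v = sum_list (map (\<lambda>(s, t). \<mu> s t) p)) \<and>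
     (\<forall>p. set p \<subseteq> S \<times> T \<longrightarrow> sum_list (map (\<lambda>(s, t). \<mu> s t) p) = 0 \<longrightarrow> tensor_zero S T s1 s2 p)"

text \<open>Image in M of A \<otimes> X_S under a \<otimes> x \<mapsto> a \<cdot> x.\<close>
definition left_span :: "('a \<Rightarrow> 'm::ab_group_add \<Rightarrow> 'm) \<Rightarrow> (nat \<Rightarrow> 'm set) \<Rightarrow> nat set \<Rightarrow> 'm set" where
  "left_span lM X S = {sum_list (map (\<lambda>(a, x). lM a x) p) | p. set p \<subseteq> UNIV \<times> hsums X S}"

definition koszul_sign :: "nat \<Rightarrow> 'm::ab_group_add \<Rightarrow> 'm" where
  "koszul_sign k v = (if even k then v else - v)"

end

theory Submission
  imports Defs
begin



lemma rels_finite: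
  assumes "h \<in> tensor_rels S T s1 s2"
  shows "finite {v. h v \<noteq> 0}"
  using assms
proof induction
  case zero then show ?case by simp
next
  case (add_left a a' x)
  have "{v. delta (a + a', x) v - delta (a, x) v - delta (a', x) v \<noteq> 0} \<subseteq> {(a+a',x),(a,x),(a',x)}"
    by (auto simp: delta_def)
  then show ?case by (rule finite_subset) simp
next
  case (add_right a x x')
  have "{v. delta (a, x + x') v - delta (a, x) v - delta (a, x') v \<noteq> 0} \<subseteq> {(a,x+x'),(a,x),(a,x')}"
    by (auto simp: delta_def)
  then show ?case by (rule finite_subset) simp
next
  case (balanced a x r)
  have "{v. delta (s1 r a, x) v - delta (a, s2 r x) v \<noteq> 0} \<subseteq> {(s1 r a, x),(a, s2 r x)}"
    by (auto simp: delta_def)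
  then show ?case by (rule finite_subset) simp
next
  case (diff p q)
  have "{v. p v - q v \<noteq> 0} \<subseteq> {v. p v \<noteq> 0} \<union> {v. q v \<noteq> 0}" by auto
  then show ?case using diff by (auto intro: finite_subset)
qed

lemma rels_neg:
  assumes "p \<in> tensor_rels S T s1 s2"
  shows "(\<lambda>v. - p v) \<in> tensor_rels S T s1 s2"
  using tensor_rels.diff[OF tensor_rels.zero assms] by simp

lemma rels_add:
  assumes "p \<in> tensor_rels S T s1 s2" "q \<in> tensor_rels S T s1 s2"
  shows "(\<lambda>v. p v + q v) \<in> tensor_rels S T s1 s2"
  using tensor_rels.diff[OF assms(1) rels_neg[OF assms(2)]] by simp

lemma rels_eq: "p \<in> tensor_rels S T s1 s2 \<Longrightarrow> p = q \<Longrightarrow> q \<in> tensor_rels S T s1 s2" by simp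

definition push :: "('u \<Rightarrow> 'w) \<Rightarrow> ('u \<Rightarrow> int) \<Rightarrow> 'w \<Rightarrow> int" where
  "push F h w = sum h {u. h u \<noteq> 0 \<and> F u = w}"

lemma push_D:
  assumes "finite D" "{u. h u \<noteq> 0} \<subseteq> D"
  shows "push F h w = sum h {u\<in>D. F u = w}"
  unfolding push_def
  by (rule sum.mono_neutral_left) (use assms in auto)

lemma push_diff:
  assumes "finite {u. p u \<noteq> 0}" "finite {u. q u \<noteq> 0}"
  shows "push F (\<lambda>v. p v - q v) = (\<lambda>w. push F p w - push F q w)"
proof
  fix w
  let ?D = "{u. p u \<noteq> 0} \<union> {u. q u \<noteq> 0}"
  have "push F (\<lambda>v. p v - q v) w = sum (\<lambda>v. p v - q v) {u\<in>?D. F u = w}"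
    by (rule push_D) (use assms in auto)
  also have "\<dots> = sum p {u\<in>?D. F u = w} - sum q {u\<in>?D. F u = w}"
    by (simp add: sum_subtractf)
  also have "\<dots> = push F p w - push F q w"
    using push_D[of ?D p F w] push_D[of ?D q F w] assms by auto
  finally show "push F (\<lambda>v. p v - q v) w = push F p w - push F q w" .
qed

lemma push_add:
  assumes "finite {u. p u \<noteq> 0}" "finite {u. q u \<noteq> 0}"
  shows "push F (\<lambda>v. p v + q v) = (\<lambda>w. push F p w + push F q w)"
proof
  fix w
  let ?D = "{u. p u \<noteq> 0} \<union> {u. q u \<noteq> 0}"
  have "push F (\<lambda>v. p v + q v) w = sum (\<lambda>v. p v + q v) {u\<in>?D. F u = w}"
    by (rule push_D) (use assms in auto)
  also have "\<dots> = sum p {u\<in>?D. F u = w} + sum q {u\<in>?D. F u = w}"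
    by (simp add: sum.distrib)
  also have "\<dots> = push F p w + push F q w"
    using push_D[of ?D p F w] push_D[of ?D q F w] assms by auto
  finally show "push F (\<lambda>v. p v + q v) w = push F p w + push F q w" .
qed

lemma delta_finite: "finite {v. delta u v \<noteq> 0}"
proof -
  have "{v. delta u v \<noteq> 0} \<subseteq> {u}" by (auto simp: delta_def)
  then show ?thesis by (rule finite_subset) simp
qed

lemma push_delta: "push F (delta u) = delta (F u)"
proof
  fix w
  have "push F (delta u) w = sum (delta u) {v\<in>{u}. F v = w}"
    by (rule push_D) (auto simp: delta_def)
  moreover have "{v\<in>{u}. F v = w} = (if F u = w then {u} else {})" by auto
  ultimately show "push F (delta u) w = delta (F u) w"
    by (cases "F u = w") (auto simp: delta_def)
qed

lemma push2: "push F (\<lambda>v. delta A v - delta B v) = (\<lambda>v. delta (F A) v - delta (F B) v)"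
  using push_diff[of "delta A" "delta B" F] by (simp add: delta_finite push_delta)

lemma diff2_finite: "finite {v. delta A v - delta B v \<noteq> 0}"
proof -
  have "{v. delta A v - delta B v \<noteq> (0::int)} \<subseteq> {A, B}" by (auto simp: delta_def)
  then show ?thesis by (rule finite_subset) simp
qed

lemma push3: "push F (\<lambda>v. delta A v - delta B v - delta C v) = (\<lambda>v. delta (F A) v - delta (F B) v - delta (F C) v)"
  using push_diff[OF diff2_finite[of A B] delta_finite[of C], of F]
  by (simp add: push_delta push2)

lemma push_rels:
  assumes h: "h \<in> tensor_rels S T s1 s2"
  and AL: "\<And>a a' x. a \<in> S \<Longrightarrow> a' \<in> S \<Longrightarrow> x \<in> T \<Longrightarrow>
     (\<lambda>v. delta (F (a + a', x)) v - delta (F (a, x)) v - delta (F (a', x)) v) \<in> tensor_rels S' T' s1' s2'"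
  and AR: "\<And>a x x'. a \<in> S \<Longrightarrow> x \<in> T \<Longrightarrow> x' \<in> T \<Longrightarrow>
     (\<lambda>v. delta (F (a, x + x')) v - delta (F (a, x)) v - delta (F (a, x')) v) \<in> tensor_rels S' T' s1' s2'"
  and BAL: "\<And>a x r. a \<in> S \<Longrightarrow> x \<in> T \<Longrightarrow>
     (\<lambda>v. delta (F (s1 r a, x)) v - delta (F (a, s2 r x)) v) \<in> tensor_rels S' T' s1' s2'"
  shows "push F h \<in> tensor_rels S' T' s1' s2'"
  using h
proof induction
  case zero
  have "push F (\<lambda>v. 0) = (\<lambda>v. 0)" by (auto simp: push_def)
  then show ?case by (simp add: tensor_rels.zero)
next
  case (add_left a a' x) then show ?case by (simp add: push3 AL)
next
  case (add_right a x x') then show ?case by (simp add: push3 AR)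
next
  case (balanced a x r) then show ?case by (simp add: push2 BAL)
next
  case (diff p q)
  then show ?case using push_diff[OF rels_finite[OF diff(1)] rels_finite[OF diff(2)], of F]
    by (simp add: tensor_rels.diff)
qed




primrec natmul :: "nat \<Rightarrow> 'm::ab_group_add \<Rightarrow> 'm" where
  "natmul 0 x = 0"
| "natmul (Suc n) x = x + natmul n x"

lemma natmul_add: "natmul (m + n) x = natmul m x + natmul n x"
  by (induction m) (simp_all add: add.assoc)

lemma natmul_plus: "natmul n (x + y) = natmul n x + natmul n y"
  by (induction n) (simp_all add: algebra_simps)

lemma natmul_zero: "natmul n 0 = 0"
  by (induction n) simp_all

definition zmul :: "int \<Rightarrow> 'm::ab_group_add \<Rightarrow> 'm" where
  "zmul k x = natmul (nat k) x - natmul (nat (- k)) x"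

lemma natmul_eqdiff:
  assumes "a + d = b + c"
  shows "natmul a x - natmul b x = natmul c x - natmul d x"
proof -
  have "natmul a x + natmul d x = natmul b x + natmul c x"
    by (metis assms natmul_add)
  then show ?thesis by (simp add: algebra_simps)
qed

lemma zmul_add: "zmul (k + l) x = zmul k x + zmul l x"
proof -
  have "zmul (k + l) x = natmul (nat k + nat l) x - natmul (nat (-k) + nat (-l)) x"
    unfolding zmul_def by (rule natmul_eqdiff) (simp split: split_nat)
  then show ?thesis unfolding zmul_def natmul_add by (simp add: algebra_simps)
qed

lemma zmul_diff: "zmul (k - l) x = zmul k x - zmul l x"
  using zmul_add[of "k - l" l x] by (simp add: algebra_simps)

lemma zmul_0[simp]: "zmul 0 x = 0" by (simp add: zmul_def)
lemma zmul_1[simp]: "zmul 1 x = x" by (simp add: zmul_def)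
lemma zmul_zero[simp]: "zmul k 0 = 0" by (simp add: zmul_def natmul_zero)

definition ev :: "('u \<Rightarrow> 'm::ab_group_add) \<Rightarrow> ('u \<Rightarrow> int) \<Rightarrow> 'm" where
  "ev \<mu> h = sum (\<lambda>u. zmul (h u) (\<mu> u)) {u. h u \<noteq> 0}"

lemma ev_D:
  assumes "finite D" "{u. h u \<noteq> 0} \<subseteq> D"
  shows "ev \<mu> h = sum (\<lambda>u. zmul (h u) (\<mu> u)) D"
  unfolding ev_def
  by (rule sum.mono_neutral_left) (use assms in auto)

lemma ev_diff:
  assumes "finite {u. p u \<noteq> 0}" "finite {u. q u \<noteq> 0}"
  shows "ev \<mu> (\<lambda>v. p v - q v) = ev \<mu> p - ev \<mu> q"
proof -
  let ?D = "{u. p u \<noteq> 0} \<union> {u. q u \<noteq> 0}"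
  have "ev \<mu> (\<lambda>v. p v - q v) = sum (\<lambda>u. zmul (p u - q u) (\<mu> u)) ?D"
    by (rule ev_D) (use assms in auto)
  also have "\<dots> = sum (\<lambda>u. zmul (p u) (\<mu> u)) ?D - sum (\<lambda>u. zmul (q u) (\<mu> u)) ?D"
    by (simp add: zmul_diff sum_subtractf)
  also have "\<dots> = ev \<mu> p - ev \<mu> q"
    using ev_D[of ?D p \<mu>] ev_D[of ?D q \<mu>] assms by auto
  finally show ?thesis .
qed

lemma ev_add:
  assumes "finite {u. p u \<noteq> 0}" "finite {u. q u \<noteq> 0}"
  shows "ev \<mu> (\<lambda>v. p v + q v) = ev \<mu> p + ev \<mu> q"
proof -
  let ?D = "{u. p u \<noteq> 0} \<union> {u. q u \<noteq> 0}"
  have "ev \<mu> (\<lambda>v. p v + q v) = sum (\<lambda>u. zmul (p u + q u) (\<mu> u)) ?D"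
    by (rule ev_D) (use assms in auto)
  also have "\<dots> = sum (\<lambda>u. zmul (p u) (\<mu> u)) ?D + sum (\<lambda>u. zmul (q u) (\<mu> u)) ?D"
    by (simp add: zmul_add sum.distrib)
  also have "\<dots> = ev \<mu> p + ev \<mu> q"
    using ev_D[of ?D p \<mu>] ev_D[of ?D q \<mu>] assms by auto
  finally show ?thesis .
qed

lemma ev_delta: "ev \<mu> (delta u) = \<mu> u"
proof -
  have "ev \<mu> (delta u) = sum (\<lambda>v. zmul (delta u v) (\<mu> v)) {u}"
    by (rule ev_D) (auto simp: delta_def)
  then show ?thesis by (simp add: delta_def)
qed

lemma ev2: "ev \<mu> (\<lambda>v. delta A v - delta B v) = \<mu> A - \<mu> B"
  using ev_diff[OF delta_finite[of A] delta_finite[of B], of \<mu>] by (simp add: ev_delta)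

lemma ev3: "ev \<mu> (\<lambda>v. delta A v - delta B v - delta C v) = \<mu> A - \<mu> B - \<mu> C"
  using ev_diff[OF diff2_finite[of A B] delta_finite[of C], of \<mu>] by (simp add: ev_delta ev2)

lemma ev_rels:
  assumes h: "h \<in> tensor_rels S T s1 s2"
  and AL: "\<And>a a' x. a \<in> S \<Longrightarrow> a' \<in> S \<Longrightarrow> x \<in> T \<Longrightarrow> \<mu> (a + a', x) = \<mu> (a, x) + \<mu> (a', x)"
  and AR: "\<And>a x x'. a \<in> S \<Longrightarrow> x \<in> T \<Longrightarrow> x' \<in> T \<Longrightarrow> \<mu> (a, x + x') = \<mu> (a, x) + \<mu> (a, x')"
  and BAL: "\<And>a x r. a \<in> S \<Longrightarrow> x \<in> T \<Longrightarrow> \<mu> (s1 r a, x) = \<mu> (a, s2 r x)"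
  shows "ev \<mu> h = 0"
  using h
proof induction
  case zero
  show ?case by (simp add: ev_def)
next
  case (add_left a a' x) then show ?case by (simp add: ev3 AL)
next
  case (add_right a x x') then show ?case by (simp add: ev3 AR)
next
  case (balanced a x r) then show ?case by (simp add: ev2 BAL)
next
  case (diff p q)
  then show ?case using ev_diff[OF rels_finite[OF diff(1)] rels_finite[OF diff(2)], of \<mu>]
    by simp
qed

definition cnt :: "'u list \<Rightarrow> 'u \<Rightarrow> int" where
  "cnt p = (\<lambda>v. int (count_list p v))"

lemma cnt_Nil: "cnt [] = (\<lambda>v. 0)" by (simp add: cnt_def)

lemma cnt_Cons: "cnt (x # p) = (\<lambda>v. delta x v + cnt p v)"
  by (auto simp: cnt_def delta_def)

lemma cnt_append: "cnt (p @ q) = (\<lambda>v. cnt p v + cnt q v)"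
  by (simp add: cnt_def)

lemma cnt_finite: "finite {v. cnt p v \<noteq> 0}"
proof -
  have "{v. cnt p v \<noteq> 0} \<subseteq> set p" by (auto simp: cnt_def count_list_0_iff)
  then show ?thesis by (rule finite_subset) simp
qed

lemma ev_cnt: "ev \<mu> (cnt p) = sum_list (map \<mu> p)"
proof (induction p)
  case Nil then show ?case by (simp add: cnt_Nil ev_def)
next
  case (Cons x p)
  then show ?case by (simp add: cnt_Cons ev_add[OF delta_finite cnt_finite] ev_delta)
qed

lemma push_cnt: "push F (cnt p) = cnt (map F p)"
proof (induction p)
  case Nil then show ?case by (auto simp: cnt_Nil push_def)
next
  case (Cons x p)
  then show ?case by (simp add: cnt_Cons push_add[OF delta_finite cnt_finite] push_delta)
qed

lemma cnt_filter: "cnt q = (\<lambda>v. cnt (filter P q) v + cnt (filter (\<lambda>x. \<not> P x) q) v)"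
  by (induction q) (auto simp: cnt_def fun_eq_iff)

lemma sum_list_filter: "sum_list (map f q) = sum_list (map f (filter P q)) + sum_list (map f (filter (\<lambda>x. \<not> P x) q))"
  for f :: "_ \<Rightarrow> 'm::ab_group_add"
  by (induction q) (auto simp: algebra_simps)

lemma sum_list_in:
  assumes "0 \<in> C" "\<And>u v. u \<in> C \<Longrightarrow> v \<in> C \<Longrightarrow> u + v \<in> C" "\<And>x. x \<in> set xs \<Longrightarrow> f x \<in> C"
  shows "sum_list (map f xs) \<in> C"
  using assms(3) by (induction xs) (auto intro: assms(1,2))

lemma sum_in:
  assumes "0 \<in> C" "\<And>u v. u \<in> C \<Longrightarrow> v \<in> C \<Longrightarrow> u + v \<in> C" "\<And>x. x \<in> A \<Longrightarrow> f x \<in> C"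
  shows "sum f A \<in> C"
  using assms(3)
proof (induction A rule: infinite_finite_induct)
  case (infinite A) then show ?case using assms(1) by simp
next
  case empty then show ?case using assms(1) by simp
next
  case (insert x F) then show ?case using assms(2) by simp
qed

lemma additive_zero:
  fixes f :: "'a::ab_group_add \<Rightarrow> 'b::ab_group_add"
  assumes "\<And>x y. f (x + y) = f x + f y"
  shows "f 0 = (0::'b::ab_group_add)"
proof - have "f 0 + f 0 = f 0 + 0" using assms[of 0 0] by simp
 then show ?thesis by (rule add_left_imp_eq) qed

lemma additive_neg:
  fixes f :: "'a::ab_group_add \<Rightarrow> 'b::ab_group_add"
  assumes "\<And>x y. f (x + y) = f x + f y"
  shows "f (- x) = - f x"
  using assms[of x "-x"] additive_zero[of f, OF assms] by (simp add: eq_neg_iff_add_eq_0 add.commute)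

lemma additive_diff:
  fixes f :: "'a::ab_group_add \<Rightarrow> 'b::ab_group_add"
  assumes "\<And>x y. f (x + y) = f x + f y"
  shows "f (x - y) = f x - f y"
  using assms[of x "-y"] additive_neg[of f, OF assms] by simp

lemma additive_sum:
  fixes f :: "'a::ab_group_add \<Rightarrow> 'b::ab_group_add"
  assumes "\<And>x y. f (x + y) = f x + f y"
  shows "f (sum g A) = sum (\<lambda>x. f (g x)) A"
proof (induction A rule: infinite_finite_induct)
  case (infinite A) then show ?case using additive_zero[OF assms] by simp
next
  case empty then show ?case using additive_zero[OF assms] by simp
next
  case (insert x F) then show ?case using assms by simp
qed

lemma additive_sum_list:
  fixes f :: "'a::ab_group_add \<Rightarrow> 'b::ab_group_add"
  assumes "\<And>x y. f (x + y) = f x + f y"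
  shows "f (sum_list xs) = sum_list (map f xs)"
  by (induction xs) (simp_all add: assms additive_zero[OF assms])

definition gcomp :: "(nat \<Rightarrow> 'a::ab_group_add set) \<Rightarrow> 'a \<Rightarrow> nat \<Rightarrow> 'a" where
  "gcomp G v = (THE f. (\<forall>n. f n \<in> G n) \<and> finite {n. f n \<noteq> 0} \<and> v = sum f {n. f n \<noteq> 0})"

lemma gcomp_props:
  assumes "graded_dsum G"
  shows "(\<forall>n. gcomp G v n \<in> G n) \<and> finite {n. gcomp G v n \<noteq> 0} \<and> v = sum (gcomp G v) {n. gcomp G v n \<noteq> 0}"
proof -
  have "\<exists>!f. (\<forall>n. f n \<in> G n) \<and> finite {n. f n \<noteq> 0} \<and> v = sum f {n. f n \<noteq> 0}"
    using assms by (simp add: graded_dsum_def)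
  then show ?thesis unfolding gcomp_def by (rule theI')
qed

lemma gcomp_in: "graded_dsum G \<Longrightarrow> gcomp G v n \<in> G n"
  using gcomp_props by blast

lemma gcomp_fin: "graded_dsum G \<Longrightarrow> finite {n. gcomp G v n \<noteq> 0}"
  using gcomp_props by blast

lemma gcomp_sum:
  assumes "graded_dsum G" "finite D" "{n. gcomp G v n \<noteq> 0} \<subseteq> D"
  shows "v = sum (gcomp G v) D"
proof -
  have "v = sum (gcomp G v) {n. gcomp G v n \<noteq> 0}" using gcomp_props[OF assms(1)] by blast
  also have "\<dots> = sum (gcomp G v) D"
    by (rule sum.mono_neutral_left) (use assms in auto)
  finally show ?thesis .
qed

lemma gcomp_unique:
  assumes G: "graded_dsum G" and g: "\<And>n. g n \<in> G n" and D: "finite D" "{n. g n \<noteq> 0} \<subseteq> D"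
    and v: "v = sum g D"
  shows "gcomp G v = g"
proof -
  have ex: "\<exists>!f. (\<forall>n. f n \<in> G n) \<and> finite {n. f n \<noteq> 0} \<and> v = sum f {n. f n \<noteq> 0}"
    using G by (simp add: graded_dsum_def)
  have fin: "finite {n. g n \<noteq> 0}" using D finite_subset by blast
  have "sum g D = sum g {n. g n \<noteq> 0}"
    by (rule sum.mono_neutral_right) (use D in auto)
  then have "(\<forall>n. g n \<in> G n) \<and> finite {n. g n \<noteq> 0} \<and> v = sum g {n. g n \<noteq> 0}"
    using g fin v by auto
  then show ?thesis unfolding gcomp_def using the1_equality[OF ex] by blast
qed

lemma gcomp_inj:
  assumes "graded_dsum G" "gcomp G v = gcomp G w"
  shows "v = w"
  using gcomp_props[OF assms(1), of v] gcomp_props[OF assms(1), of w] assms(2) by metis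

lemma dsum_closed:
  assumes "graded_dsum G"
  shows "0 \<in> G n" "x \<in> G n \<Longrightarrow> y \<in> G n \<Longrightarrow> x + y \<in> G n" "x \<in> G n \<Longrightarrow> - x \<in> G n"
  using assms by (auto simp: graded_dsum_def)

lemma gcomp_map:
  fixes f :: "'a::ab_group_add \<Rightarrow> 'a"
  assumes G: "graded_dsum G" and add: "\<And>x y. f (x + y) = f x + f y"
    and pres: "\<And>n x. x \<in> G n \<Longrightarrow> f x \<in> G n"
  shows "gcomp G (f v) = (\<lambda>n. f (gcomp G v n))"
proof (rule gcomp_unique[OF G, where D = "{n. gcomp G v n \<noteq> 0}"])
  show "\<And>n. f (gcomp G v n) \<in> G n" using pres gcomp_in[OF G] by blast
  show "finite {n. gcomp G v n \<noteq> 0}" using gcomp_fin[OF G] .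
  show "{n. f (gcomp G v n) \<noteq> 0} \<subseteq> {n. gcomp G v n \<noteq> 0}"
    using additive_zero[OF add] by auto
  have "f v = f (sum (gcomp G v) {n. gcomp G v n \<noteq> 0})"
    using gcomp_props[OF G] by metis
  then show "f v = (\<Sum>n | gcomp G v n \<noteq> 0. f (gcomp G v n))"
    using additive_sum[OF add] by simp
qed

lemma gcomp_add:
  assumes G: "graded_dsum G"
  shows "gcomp G (v + w) = (\<lambda>n. gcomp G v n + gcomp G w n)"
proof (rule gcomp_unique[OF G, where D = "{n. gcomp G v n \<noteq> 0} \<union> {n. gcomp G w n \<noteq> 0}"])
  show "\<And>n. gcomp G v n + gcomp G w n \<in> G n" using gcomp_in[OF G] dsum_closed[OF G] by blast
  show "finite ({n. gcomp G v n \<noteq> 0} \<union> {n. gcomp G w n \<noteq> 0})" using gcomp_fin[OF G] by blast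
  show "{n. gcomp G v n + gcomp G w n \<noteq> 0} \<subseteq> {n. gcomp G v n \<noteq> 0} \<union> {n. gcomp G w n \<noteq> 0}"
    by auto
  have "v = sum (gcomp G v) ({n. gcomp G v n \<noteq> 0} \<union> {n. gcomp G w n \<noteq> 0})"
    by (rule gcomp_sum[OF G]) (use gcomp_fin[OF G] in auto)
  moreover have "w = sum (gcomp G w) ({n. gcomp G v n \<noteq> 0} \<union> {n. gcomp G w n \<noteq> 0})"
    by (rule gcomp_sum[OF G]) (use gcomp_fin[OF G] in auto)
  ultimately show "v + w = (\<Sum>n\<in>{n. gcomp G v n \<noteq> 0} \<union> {n. gcomp G w n \<noteq> 0}. gcomp G v n + gcomp G w n)"
    by (simp add: sum.distrib)
qed

lemma gcomp_hom:
  assumes G: "graded_dsum G" and v: "v \<in> G k"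
  shows "gcomp G v = (\<lambda>n. if n = k then v else 0)"
proof (rule gcomp_unique[OF G, where D = "{k}"])
  show "\<And>n. (if n = k then v else 0) \<in> G n" using v dsum_closed[OF G] by auto
qed auto




locale L7 =
  fixes alg :: "'r::comm_ring_1 \<Rightarrow> 'a::ring_1"
    and GA :: "nat \<Rightarrow> 'a set"
    and lM :: "'a \<Rightarrow> 'm::ab_group_add \<Rightarrow> 'm"
    and rM :: "'m \<Rightarrow> 'a \<Rightarrow> 'm"
    and GM :: "nat \<Rightarrow> 'm set"
    and X :: "nat \<Rightarrow> 'm set"
  assumes A1: "graded_R_algebra alg GA"
    and A2: "graded_bimodule alg GA lM rM GM"
    and A3: "graded_submod alg lM GM X"
    and A4: "tensor_mult_bij UNIV (hsums X UNIV) (\<lambda>r a. a * alg r) (\<lambda>r x. lM (alg r) x) lM"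
    and A5: "\<forall>m n a x b. x \<in> X m \<longrightarrow> b \<in> GA n \<longrightarrow>
           rM (lM a x) b - koszul_sign (m * n) (lM (a * b) x) \<in> left_span lM X {..<m}"
begin

lemma lM_add2: "lM a (m + m') = lM a m + lM a m'" using A2 by (simp add: graded_bimodule_def)
lemma lM_add1: "lM (a + a') m = lM a m + lM a' m" using A2 by (simp add: graded_bimodule_def)
lemma lM_1: "lM 1 m = m" using A2 by (simp add: graded_bimodule_def)
lemma rM_add1: "rM (m + m') b = rM m b + rM m' b" using A2 by (simp add: graded_bimodule_def)
lemma rM_add2: "rM m (b + b') = rM m b + rM m b'" using A2 by (simp add: graded_bimodule_def)
lemma rM_mult: "rM m (b * b') = rM (rM m b) b'" using A2 by (simp add: graded_bimodule_def)
lemma alg_lr: "lM (alg r) m = rM m (alg r)" using A2 by (simp add: graded_bimodule_def)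
lemma GM_dsum: "graded_dsum GM" using A2 by (simp add: graded_bimodule_def)
lemma lM_deg: "a \<in> GA i \<Longrightarrow> m \<in> GM k \<Longrightarrow> lM a m \<in> GM (i + k)" using A2 by (simp add: graded_bimodule_def)
lemma GA_dsum: "graded_dsum GA" using A1 unfolding graded_R_algebra_def by blast
lemma alg_comm: "alg r * a = a * alg r" using A1 unfolding graded_R_algebra_def by metis
lemma alg_deg: "a \<in> GA n \<Longrightarrow> alg r * a \<in> GA n" using A1 unfolding graded_R_algebra_def by blast
lemma one_deg: "1 \<in> GA 0" using A1 unfolding graded_R_algebra_def by blast
lemma alg0: "alg r \<in> GA 0" using alg_deg[OF one_deg, of r] by simp
lemma X_sub: "X n \<subseteq> GM n" using A3 by (simp add: graded_submod_def)
lemma X_0: "0 \<in> X n" using A3 by (simp add: graded_submod_def)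
lemma X_add: "x \<in> X n \<Longrightarrow> y \<in> X n \<Longrightarrow> x + y \<in> X n" using A3 by (simp add: graded_submod_def)

lemma lM_neg1: "lM (- a) m = - lM a m"
  using additive_neg[of "\<lambda>a. lM a m"] lM_add1 by blast
lemma lM_neg2: "lM a (- m) = - lM a m"
  using additive_neg[of "lM a"] lM_add2 by blast
lemma rM_neg2: "rM m (- b) = - rM m b"
  using additive_neg[of "rM m"] rM_add2 by blast

abbreviation "T \<equiv> hsums X UNIV"
abbreviation "RT \<equiv> tensor_rels T UNIV (\<lambda>r y. lM (alg r) y) (\<lambda>r b. alg r * b)"
abbreviation "LS S \<equiv> left_span lM X S"
abbreviation "Rv p \<equiv> sum_list (map (\<lambda>(s, t). rM s t) p)"
abbreviation "Lv p \<equiv> sum_list (map (\<lambda>(s, t). lM s t) p)"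

lemma ks_add: "koszul_sign k (u + v) = koszul_sign k u + koszul_sign k v"
  by (simp add: koszul_sign_def)
lemma ks_ks: "koszul_sign k (koszul_sign k u) = u"
  by (simp add: koszul_sign_def)
lemma ks_diff: "koszul_sign k (u - v) = koszul_sign k u - koszul_sign k v"
  by (simp add: koszul_sign_def)
lemma ks_mult: "koszul_sign k (u * c) = koszul_sign k u * (c::'a)"
  by (simp add: koszul_sign_def)
lemma ks_lM: "lM (koszul_sign k a) y = koszul_sign k (lM a y)"
  by (simp add: koszul_sign_def lM_neg1)

lemma hsumsE:
  assumes "u \<in> hsums X S"
  obtains xs where "set xs \<subseteq> (\<Union>n\<in>S. X n)" "u = sum_list xs"
  using assms unfolding hsums_def by auto
lemma hsums_0: "0 \<in> hsums X S" unfolding hsums_def by (rule CollectI, rule exI[of _ "[]"]) simp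
lemma hsums_add: "u \<in> hsums X S \<Longrightarrow> v \<in> hsums X S \<Longrightarrow> u + v \<in> hsums X S"
proof -
  assume "u \<in> hsums X S" "v \<in> hsums X S"
  then obtain xs ys where "set xs \<subseteq> (\<Union>n\<in>S. X n)" "u = sum_list xs"
     "set ys \<subseteq> (\<Union>n\<in>S. X n)" "v = sum_list ys" by (elim hsumsE)
  then show ?thesis unfolding hsums_def by (intro CollectI exI[of _ "xs @ ys"]) auto
qed
lemma hsums_X: "j \<in> S \<Longrightarrow> x \<in> X j \<Longrightarrow> x \<in> hsums X S"
  unfolding hsums_def by (rule CollectI, rule exI[of _ "[x]"]) auto
lemma hsums_mono: "S \<subseteq> S' \<Longrightarrow> hsums X S \<subseteq> hsums X S'"
proof
  fix u assume S: "S \<subseteq> S'" and "u \<in> hsums X S"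
  then obtain xs where "set xs \<subseteq> (\<Union>n\<in>S. X n)" "u = sum_list xs" by (elim hsumsE)
  then show "u \<in> hsums X S'" unfolding hsums_def using S by (intro CollectI exI[of _ xs]) auto
qed

lemma LSE:
  assumes "u \<in> LS S"
  obtains p where "set p \<subseteq> UNIV \<times> hsums X S" "u = Lv p"
  using assms unfolding left_span_def by auto
lemma LS_0: "0 \<in> LS S" unfolding left_span_def by (rule CollectI, rule exI[of _ "[]"]) simp
lemma LS_add: "u \<in> LS S \<Longrightarrow> v \<in> LS S \<Longrightarrow> u + v \<in> LS S"
proof -
  assume "u \<in> LS S" "v \<in> LS S"
  then obtain p q where "set p \<subseteq> UNIV \<times> hsums X S" "u = Lv p"
     "set q \<subseteq> UNIV \<times> hsums X S" "v = Lv q" by (elim LSE)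
  then show ?thesis unfolding left_span_def by (intro CollectI exI[of _ "p @ q"]) auto
qed
lemma LS_mono: "S \<subseteq> S' \<Longrightarrow> LS S \<subseteq> LS S'"
proof
  fix u assume S: "S \<subseteq> S'" and "u \<in> LS S"
  then obtain p where "set p \<subseteq> UNIV \<times> hsums X S" "u = Lv p" by (elim LSE)
  moreover have "hsums X S \<subseteq> hsums X S'" using hsums_mono[OF S] .
  ultimately show "u \<in> LS S'" unfolding left_span_def by (intro CollectI exI[of _ p]) auto
qed
lemma LS_gen: "y \<in> hsums X S \<Longrightarrow> lM a y \<in> LS S"
  unfolding left_span_def by (rule CollectI, rule exI[of _ "[(a,y)]"]) auto
lemma LS_sum: "(\<And>x. x \<in> A \<Longrightarrow> f x \<in> LS S) \<Longrightarrow> sum f A \<in> LS S"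
  by (rule sum_in[OF LS_0 LS_add])
lemma LS_sum_list: "(\<And>x. x \<in> set xs \<Longrightarrow> f x \<in> LS S) \<Longrightarrow> sum_list (map f xs) \<in> LS S"
  by (rule sum_list_in[OF LS_0 LS_add])
lemma LS_neg: "u \<in> LS S \<Longrightarrow> - u \<in> LS S"
proof -
  assume "u \<in> LS S"
  then obtain p where p: "set p \<subseteq> UNIV \<times> hsums X S" "u = Lv p" by (elim LSE)
  have "- u = sum_list (map (\<lambda>e. - (case e of (s, t) \<Rightarrow> lM s t)) p)"
    unfolding p(2) uminus_sum_list_map by (simp add: o_def)
  also have "\<dots> \<in> LS S"
  proof (rule LS_sum_list)
    fix e assume "e \<in> set p"
    then obtain a y where e: "e = (a, y)" "y \<in> hsums X S" using p(1) by auto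
    have "- lM a y = lM (- a) y" by (simp add: lM_neg1)
    then show "- (case e of (s, t) \<Rightarrow> lM s t) \<in> LS S" using e LS_gen by simp
  qed
  finally show ?thesis .
qed
lemma LS_diff: "u \<in> LS S \<Longrightarrow> v \<in> LS S \<Longrightarrow> u - v \<in> LS S"
proof -
  assume "u \<in> LS S" "v \<in> LS S"
  then have "u + - v \<in> LS S" by (intro LS_add LS_neg)
  then show ?thesis by (simp only: diff_conv_add_uminus)
qed

definition theta :: "nat \<Rightarrow> 'a \<Rightarrow> 'a" where
  "theta m b = sum (\<lambda>n. koszul_sign (m * n) (gcomp GA b n)) {n. gcomp GA b n \<noteq> 0}"

lemma gcomp_theta: "gcomp GA (theta m b) = (\<lambda>n. koszul_sign (m * n) (gcomp GA b n))"
proof (rule gcomp_unique[OF GA_dsum, where D = "{n. gcomp GA b n \<noteq> 0}"])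
  show "\<And>n. koszul_sign (m * n) (gcomp GA b n) \<in> GA n"
    using gcomp_in[OF GA_dsum] dsum_closed[OF GA_dsum] by (auto simp: koszul_sign_def)
  show "finite {n. gcomp GA b n \<noteq> 0}" using gcomp_fin[OF GA_dsum] .
  show "{n. koszul_sign (m * n) (gcomp GA b n) \<noteq> 0} \<subseteq> {n. gcomp GA b n \<noteq> 0}"
    by (auto simp: koszul_sign_def)
qed (simp add: theta_def)

lemma theta_add: "theta m (b + b') = theta m b + theta m b'"
  by (rule gcomp_inj[OF GA_dsum]) (simp add: gcomp_add[OF GA_dsum] gcomp_theta ks_add)

lemma gcomp_ralg: "gcomp GA (b * alg r) = (\<lambda>n. gcomp GA b n * alg r)"
  by (rule gcomp_map[OF GA_dsum]) (auto simp: distrib_right intro: alg_deg[of _ _ r, unfolded alg_comm[of r]])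

lemma theta_alg: "theta m (b * alg r) = alg r * theta m b"
  by (rule gcomp_inj[OF GA_dsum]) (simp add: gcomp_ralg gcomp_theta ks_mult alg_comm[of r])

lemma theta_theta: "theta m (theta m b) = b"
  by (rule gcomp_inj[OF GA_dsum]) (simp add: gcomp_theta ks_ks)

lemma theta_neg: "theta m (- b) = - theta m b"
  using additive_neg[of "theta m"] theta_add by blast

lemma keyK:
  assumes y: "y \<in> X m"
  shows "rM y b - lM (theta m b) y \<in> LS {..<m}"
proof -
  let ?D = "{n. gcomp GA b n \<noteq> 0}"
  have b: "b = sum (gcomp GA b) ?D" using gcomp_props[OF GA_dsum] by blast
  have "rM y b = sum (\<lambda>n. rM y (gcomp GA b n)) ?D"
    by (subst b) (rule additive_sum, rule rM_add2)
  moreover have "lM (theta m b) y = sum (\<lambda>n. lM (koszul_sign (m * n) (gcomp GA b n)) y) ?D"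
    unfolding theta_def by (rule additive_sum, rule lM_add1)
  ultimately have "rM y b - lM (theta m b) y =
      sum (\<lambda>n. rM y (gcomp GA b n) - koszul_sign (m * n) (lM (gcomp GA b n) y)) ?D"
    by (simp add: sum_subtractf ks_lM)
  also have "\<dots> \<in> LS {..<m}"
  proof (rule LS_sum)
    fix n
    have "gcomp GA b n \<in> GA n" using gcomp_in[OF GA_dsum] .
    then show "rM y (gcomp GA b n) - koszul_sign (m * n) (lM (gcomp GA b n) y) \<in> LS {..<m}"
      using A5 y by (metis lM_1 mult_1)
  qed
  finally show ?thesis .
qed

end



context L7
begin

definition Im :: "'m set" where
  "Im = {Rv p | p. set p \<subseteq> T \<times> UNIV}"

lemma ImE:
  assumes "u \<in> Im"
  obtains p where "set p \<subseteq> T \<times> UNIV" "u = Rv p"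
  using assms unfolding Im_def by auto
lemma Im_0: "0 \<in> Im" unfolding Im_def by (rule CollectI, rule exI[of _ "[]"]) simp
lemma Im_add: "u \<in> Im \<Longrightarrow> v \<in> Im \<Longrightarrow> u + v \<in> Im"
proof -
  assume "u \<in> Im" "v \<in> Im"
  then obtain p q where "set p \<subseteq> T \<times> UNIV" "u = Rv p" "set q \<subseteq> T \<times> UNIV" "v = Rv q"
    by (elim ImE)
  then show ?thesis unfolding Im_def by (intro CollectI exI[of _ "p @ q"]) auto
qed
lemma Im_gen: "y \<in> T \<Longrightarrow> rM y b \<in> Im"
  unfolding Im_def by (rule CollectI, rule exI[of _ "[(y,b)]"]) auto
lemma Im_sum_list: "(\<And>x. x \<in> set xs \<Longrightarrow> f x \<in> Im) \<Longrightarrow> sum_list (map f xs) \<in> Im"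
  by (rule sum_list_in[OF Im_0 Im_add])
lemma Im_neg: "u \<in> Im \<Longrightarrow> - u \<in> Im"
proof -
  assume "u \<in> Im"
  then obtain p where p: "set p \<subseteq> T \<times> UNIV" "u = Rv p" by (elim ImE)
  have "- u = sum_list (map (\<lambda>e. - (case e of (s, t) \<Rightarrow> rM s t)) p)"
    unfolding p(2) uminus_sum_list_map by (simp add: o_def)
  also have "\<dots> \<in> Im"
  proof (rule Im_sum_list)
    fix e assume "e \<in> set p"
    then obtain y b where e: "e = (y, b)" "y \<in> T" using p(1) by auto
    have "- rM y b = rM y (- b)" by (simp add: rM_neg2)
    then show "- (case e of (s, t) \<Rightarrow> rM s t) \<in> Im" using e Im_gen by simp
  qed
  finally show ?thesis .
qed
lemma Im_diff: "u \<in> Im \<Longrightarrow> v \<in> Im \<Longrightarrow> u - v \<in> Im"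
proof -
  assume "u \<in> Im" "v \<in> Im"
  then have "u + - v \<in> Im" by (intro Im_add Im_neg)
  then show ?thesis by (simp only: diff_conv_add_uminus)
qed

lemma LS_Im:
  assumes IH: "\<And>j x a. j < m \<Longrightarrow> x \<in> X j \<Longrightarrow> lM a x \<in> Im"
    and u: "u \<in> LS {..<m}"
  shows "u \<in> Im"
proof -
  obtain p where p: "set p \<subseteq> UNIV \<times> hsums X {..<m}" "u = Lv p" using u by (elim LSE)
  show ?thesis unfolding p(2)
  proof (rule Im_sum_list)
    fix e assume "e \<in> set p"
    then obtain a y where e: "e = (a, y)" "y \<in> hsums X {..<m}" using p(1) by auto
    then obtain ys where ys: "set ys \<subseteq> (\<Union>n\<in>{..<m}. X n)" "y = sum_list ys" by (elim hsumsE)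
    have "lM a y = sum_list (map (lM a) ys)"
      unfolding ys(2) by (rule additive_sum_list, rule lM_add2)
    also have "\<dots> \<in> Im"
      by (rule Im_sum_list) (use ys(1) IH in auto)
    finally show "(case e of (s, t) \<Rightarrow> lM s t) \<in> Im" using e by simp
  qed
qed

lemma hom_Im: "x \<in> X m \<Longrightarrow> lM a x \<in> Im"
proof (induction m arbitrary: a x rule: less_induct)
  case (less m)
  have "rM x (theta m a) - lM (theta m (theta m a)) x \<in> LS {..<m}"
    by (rule keyK[OF less.prems])
  then have "rM x (theta m a) - lM a x \<in> LS {..<m}" by (simp add: theta_theta)
  then have e: "rM x (theta m a) - lM a x \<in> Im"
    by (rule LS_Im[of m, rotated]) (use less.IH in auto)
  have "rM x (theta m a) \<in> Im" by (rule Im_gen, rule hsums_X[OF _ less.prems]) simp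
  then have "rM x (theta m a) - (rM x (theta m a) - lM a x) \<in> Im" using e by (rule Im_diff)
  then show ?case by simp
qed

lemma surj: "\<exists>p. set p \<subseteq> T \<times> UNIV \<and> v = Rv p"
proof -
  obtain p where p: "set p \<subseteq> UNIV \<times> T" "v = Lv p"
    using A4 unfolding tensor_mult_bij_def by blast
  have "Lv p \<in> Im"
  proof (rule Im_sum_list)
    fix e assume "e \<in> set p"
    then obtain a y where e: "e = (a, y)" "y \<in> T" using p(1) by auto
    then obtain ys where ys: "set ys \<subseteq> (\<Union>n\<in>UNIV. X n)" "y = sum_list ys" by (elim hsumsE)
    have "lM a y = sum_list (map (lM a) ys)"
      unfolding ys(2) by (rule additive_sum_list, rule lM_add2)
    also have "\<dots> \<in> Im"
      by (rule Im_sum_list) (use ys(1) hom_Im in auto)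
    finally show "(case e of (s, t) \<Rightarrow> lM s t) \<in> Im" using e by simp
  qed
  then show ?thesis using p(2) unfolding Im_def by auto
qed

definition pi :: "nat \<Rightarrow> 'm \<Rightarrow> 'm" where "pi m x = gcomp GM x m"

lemma pi_add: "pi m (x + y) = pi m x + pi m y"
  unfolding pi_def by (simp add: gcomp_add[OF GM_dsum])

lemma pi_alg: "pi m (lM (alg r) x) = lM (alg r) (pi m x)"
proof -
  have "gcomp GM (lM (alg r) x) = (\<lambda>n. lM (alg r) (gcomp GM x n))"
  proof (rule gcomp_map[OF GM_dsum])
    show "\<And>x y. lM (alg r) (x + y) = lM (alg r) x + lM (alg r) y" by (rule lM_add2)
    show "\<And>n x. x \<in> GM n \<Longrightarrow> lM (alg r) x \<in> GM n" using lM_deg[OF alg0] by fastforce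
  qed
  then show ?thesis unfolding pi_def by simp
qed

lemma pi_X: "x \<in> X j \<Longrightarrow> pi m x = (if m = j then x else 0)"
proof -
  assume "x \<in> X j"
  then have "x \<in> GM j" using X_sub by blast
  then show ?thesis unfolding pi_def using gcomp_hom[OF GM_dsum, of x j] by simp
qed

lemma X_T: "x \<in> X j \<Longrightarrow> x \<in> T" by (rule hsums_X) simp_all

lemma pi_T: "x \<in> T \<Longrightarrow> pi m x \<in> X m"
proof -
  assume "x \<in> T"
  then obtain xs where xs: "set xs \<subseteq> (\<Union>n\<in>UNIV. X n)" "x = sum_list xs" by (elim hsumsE)
  have "pi m x = sum_list (map (pi m) xs)"
    unfolding xs(2) by (rule additive_sum_list, rule pi_add)
  also have "\<dots> \<in> X m"
  proof (rule sum_list_in[OF X_0 X_add])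
    fix x' assume "x' \<in> set xs"
    then obtain j where "x' \<in> X j" using xs(1) by auto
    then show "pi m x' \<in> X m" using pi_X[of x' j m] X_0 by auto
  qed
  finally show ?thesis .
qed

lemma pi_low: "z \<in> hsums X {..<m} \<Longrightarrow> pi m z = 0"
proof -
  assume "z \<in> hsums X {..<m}"
  then obtain zs where zs: "set zs \<subseteq> (\<Union>n\<in>{..<m}. X n)" "z = sum_list zs" by (elim hsumsE)
  have "pi m z = sum_list (map (pi m) zs)"
    unfolding zs(2) by (rule additive_sum_list, rule pi_add)
  also have "\<dots> \<in> {0}"
  proof (rule sum_list_in)
    fix x' assume "x' \<in> set zs"
    then obtain j where "j < m" "x' \<in> X j" using zs(1) by auto
    then show "pi m x' \<in> {0}" using pi_X[of x' j m] by auto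
  qed auto
  finally show ?thesis by simp
qed

end



context L7
begin

lemma R_kill: "cnt p \<in> RT \<Longrightarrow> Rv p = 0"
proof -
  assume h: "cnt p \<in> RT"
  have "ev (\<lambda>(s, t). rM s t) (cnt p) = 0"
  proof (rule ev_rels[OF h])
    show "\<And>a a' x. (case (a + a', x) of (s, t) \<Rightarrow> rM s t) = (case (a, x) of (s, t) \<Rightarrow> rM s t) + (case (a', x) of (s, t) \<Rightarrow> rM s t)"
      by (simp add: rM_add1)
    show "\<And>a x x'. (case (a, x + x') of (s, t) \<Rightarrow> rM s t) = (case (a, x) of (s, t) \<Rightarrow> rM s t) + (case (a, x') of (s, t) \<Rightarrow> rM s t)"
      by (simp add: rM_add2)
    show "\<And>a x r. (case (lM (alg r) a, x) of (s, t) \<Rightarrow> rM s t) = (case (a, alg r * x) of (s, t) \<Rightarrow> rM s t)"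
      by (simp add: alg_lr rM_mult)
  qed
  then show ?thesis by (simp add: ev_cnt)
qed

lemma delta0: "delta (0, b) \<in> RT"
proof -
  have "(\<lambda>v. delta (0 + 0, b) v - delta (0, b) v - delta (0, b) v) \<in> RT"
    by (rule tensor_rels.add_left) (auto intro: hsums_0)
  from rels_neg[OF this] show ?thesis by (rule rels_eq) (simp add: fun_eq_iff)
qed

lemma cnt_zeros: "(\<And>e. e \<in> set zs \<Longrightarrow> fst e = 0) \<Longrightarrow> cnt zs \<in> RT"
proof (induction zs)
  case Nil then show ?case by (simp add: cnt_Nil tensor_rels.zero)
next
  case (Cons e zs)
  have "delta e \<in> RT" using delta0[of "snd e"] Cons.prems[of e] by (cases e) auto
  then show ?case unfolding cnt_Cons using Cons by (intro rels_add) auto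
qed

lemma homog1:
  assumes "set xs \<subseteq> (\<Union>n. X n)"
  shows "(\<lambda>v. delta (sum_list xs, b) v - cnt (map (\<lambda>y. (y, b)) xs) v) \<in> RT"
  using assms
proof (induction xs)
  case Nil
  then show ?case using delta0[of b] by (simp add: cnt_Nil)
next
  case (Cons x xs)
  have xT: "x \<in> T" using Cons.prems X_T by auto
  have sT: "sum_list xs \<in> T" using Cons.prems unfolding hsums_def by auto
  have g: "(\<lambda>v. delta (x + sum_list xs, b) v - delta (x, b) v - delta (sum_list xs, b) v) \<in> RT"
    by (rule tensor_rels.add_left) (use xT sT in auto)
  have IH: "(\<lambda>v. delta (sum_list xs, b) v - cnt (map (\<lambda>y. (y, b)) xs) v) \<in> RT"
    using Cons by auto
  from rels_add[OF g IH] show ?case by (rule rels_eq) (simp add: fun_eq_iff cnt_Cons)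
qed

lemma homog:
  "set p \<subseteq> T \<times> UNIV \<Longrightarrow> \<exists>q. (\<forall>e\<in>set q. \<exists>j. fst e \<in> X j) \<and> (\<lambda>v. cnt p v - cnt q v) \<in> RT \<and> Rv p = Rv q"
proof (induction p)
  case Nil
  show ?case by (rule exI[of _ "[]"]) (simp add: cnt_Nil tensor_rels.zero)
next
  case (Cons e p)
  obtain y b where e: "e = (y, b)" "y \<in> T" using Cons.prems by (cases e) auto
  obtain xs where xs: "set xs \<subseteq> (\<Union>n\<in>UNIV. X n)" "y = sum_list xs" using e(2) by (elim hsumsE)
  obtain q where q: "\<forall>e\<in>set q. \<exists>j. fst e \<in> X j" "(\<lambda>v. cnt p v - cnt q v) \<in> RT" "Rv p = Rv q"
    using Cons by auto
  let ?q1 = "map (\<lambda>y. (y, b)) xs"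
  have h1: "(\<lambda>v. delta (y, b) v - cnt ?q1 v) \<in> RT" using homog1[OF xs(1), of b] xs(2) by simp
  have r1: "rM y b = Rv ?q1"
    unfolding xs(2) by (simp add: o_def additive_sum_list[of "\<lambda>y. rM y b", OF rM_add1])
  show ?case
  proof (intro exI conjI)
    show "\<forall>e\<in>set (?q1 @ q). \<exists>j. fst e \<in> X j" using q(1) xs(1) by fastforce
    from rels_add[OF h1 q(2)] show "(\<lambda>v. cnt (e # p) v - cnt (?q1 @ q) v) \<in> RT"
      by (rule rels_eq) (simp add: fun_eq_iff cnt_Cons cnt_append e)
    show "Rv (e # p) = Rv (?q1 @ q)" using r1 q(3) e by simp
  qed
qed

lemma bound: "(\<forall>e\<in>set q. \<exists>j. fst e \<in> X j) \<Longrightarrow> \<exists>m. \<forall>e\<in>set q. \<exists>j<m. fst e \<in> X j"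
proof (induction q)
  case Nil then show ?case by simp
next
  case (Cons e q)
  then obtain m j where m: "\<forall>e\<in>set q. \<exists>j<m. fst e \<in> X j" and j: "fst e \<in> X j" by auto
  show ?case
  proof (rule exI[of _ "max m (Suc j)"], intro ballI)
    fix e' assume "e' \<in> set (e # q)"
    then have "e' = e \<or> e' \<in> set q" by simp
    then show "\<exists>j'<max m (Suc j). fst e' \<in> X j'"
    proof
      assume "e' = e" then show ?thesis using j by (intro exI[of _ j]) auto
    next
      assume "e' \<in> set q"
      then obtain j' where "j' < m" "fst e' \<in> X j'" using m by blast
      then show ?thesis by (intro exI[of _ j']) auto
    qed
  qed
qed

end



context L7
begin

lemma inj_claim: "\<forall>q. (\<forall>e\<in>set q. \<exists>j<m. fst e \<in> X j) \<longrightarrow> Rv q = 0 \<longrightarrow> cnt q \<in> RT"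
proof (induction m)
  case 0
  show ?case
  proof (intro allI impI)
    fix q :: "('m \<times> 'a) list"
    assume "\<forall>e\<in>set q. \<exists>j<0. fst e \<in> X j"
    then have "q = []" by (cases q) auto
    then show "cnt q \<in> RT" by (simp add: cnt_Nil tensor_rels.zero)
  qed
next
  case (Suc m)
  show ?case
  proof (intro allI impI)
    fix q :: "('m \<times> 'a) list"
    assume H: "\<forall>e\<in>set q. \<exists>j<Suc m. fst e \<in> X j" and R0: "Rv q = 0"
    define P where "P e = (\<exists>j<m. fst e \<in> X j)" for e :: "'m \<times> 'a"
    define top where "top = filter (\<lambda>e. \<not> P e) q"
    define rest where "rest = filter P q"
    have topX: "fst e \<in> X m" if "e \<in> set top" for e
    proof -
      from that have "e \<in> set q" "\<not> P e" unfolding top_def by auto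
      then obtain j where "j < Suc m" "fst e \<in> X j" "\<not> j < m" using H unfolding P_def by blast
      then show ?thesis by (metis less_SucE)
    qed
    have Rsplit: "Rv q = Rv rest + Rv top"
      unfolding rest_def top_def by (rule sum_list_filter)
    have rest_LS: "Rv rest \<in> LS {..<m}"
    proof (rule LS_sum_list)
      fix e assume "e \<in> set rest"
      then have "P e" unfolding rest_def by simp
      then obtain j where j: "j < m" "fst e \<in> X j" unfolding P_def by blast
      obtain y b where "e = (y, b)" by (cases e)
      with j have e: "e = (y, b)" "j < m" "y \<in> X j" by auto
      have "rM y b - lM (theta j b) y \<in> LS {..<j}" by (rule keyK[OF e(3)])
      then have d: "rM y b - lM (theta j b) y \<in> LS {..<m}"
        using LS_mono[of "{..<j}" "{..<m}"] e(2) by auto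
      have l: "lM (theta j b) y \<in> LS {..<m}"
        by (rule LS_gen, rule hsums_X[OF _ e(3)]) (use e(2) in simp)
      have "rM y b = (rM y b - lM (theta j b) y) + lM (theta j b) y" by simp
      then have "rM y b \<in> LS {..<m}" using LS_add[OF d l] by simp
      then show "(case e of (s, t) \<Rightarrow> rM s t) \<in> LS {..<m}" using e by simp
    qed
    define top' where "top' = map (\<lambda>e. (theta m (snd e), fst e)) top"
    have "Rv top - Lv top' = sum_list (map (\<lambda>e. rM (fst e) (snd e) - lM (theta m (snd e)) (fst e)) top)"
      unfolding top'_def by (simp add: sum_list_subtractf o_def split_def)
    also have "\<dots> \<in> LS {..<m}"
      by (rule LS_sum_list) (use topX keyK in auto)
    finally have tdiff: "Rv top - Lv top' \<in> LS {..<m}" .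
    have "Lv top' = - Rv rest - (Rv top - Lv top')" using R0 Rsplit
      by (simp add: algebra_simps eq_neg_iff_add_eq_0)
    also have "\<dots> \<in> LS {..<m}" by (intro LS_diff LS_neg rest_LS tdiff)
    finally obtain w where w: "set w \<subseteq> UNIV \<times> hsums X {..<m}" "Lv top' = Lv w" by (elim LSE)
    define w' where "w' = map (\<lambda>e. (- fst e, snd e)) w"
    have "Lv w' = - Lv w"
      unfolding w'_def uminus_sum_list_map by (simp add: o_def split_def lM_neg1)
    then have L0: "Lv (top' @ w') = 0" using w(2) by simp
    have setT: "set (top' @ w') \<subseteq> UNIV \<times> T"
    proof -
      have "set top' \<subseteq> UNIV \<times> T" unfolding top'_def using topX X_T by auto
      moreover have "hsums X {..<m} \<subseteq> T" by (rule hsums_mono) simp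
      then have "set w' \<subseteq> UNIV \<times> T" unfolding w'_def using w(1) by auto
      ultimately show ?thesis by simp
    qed
    have RL: "cnt (top' @ w') \<in> tensor_rels UNIV T (\<lambda>r a. a * alg r) (\<lambda>r x. lM (alg r) x)"
      using A4 setT L0 unfolding tensor_mult_bij_def tensor_zero_def cnt_def by blast
    define F where "F e = (pi m (snd e), theta m (fst e))" for e :: "'a \<times> 'm"
    have pushRT: "push F (cnt (top' @ w')) \<in> RT"
    proof (rule push_rels[OF RL])
      fix a a' :: 'a and x :: 'm assume x: "x \<in> T"
      have pT: "pi m x \<in> T" using pi_T[OF x] X_T by blast
      show "(\<lambda>v. delta (F (a + a', x)) v - delta (F (a, x)) v - delta (F (a', x)) v) \<in> RT"
      proof -
        have "(\<lambda>v. delta (pi m x, theta m a + theta m a') v - delta (pi m x, theta m a) v - delta (pi m x, theta m a') v) \<in> RT"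
          by (rule tensor_rels.add_right) (use pT in auto)
        then show ?thesis by (simp add: F_def theta_add)
      qed
    next
      fix a :: 'a and x x' :: 'm assume x: "x \<in> T" "x' \<in> T"
      have pT: "pi m x \<in> T" "pi m x' \<in> T" using pi_T[OF x(1)] pi_T[OF x(2)] X_T by blast+
      show "(\<lambda>v. delta (F (a, x + x')) v - delta (F (a, x)) v - delta (F (a, x')) v) \<in> RT"
      proof -
        have "(\<lambda>v. delta (pi m x + pi m x', theta m a) v - delta (pi m x, theta m a) v - delta (pi m x', theta m a) v) \<in> RT"
          by (rule tensor_rels.add_left) (use pT in auto)
        then show ?thesis by (simp add: F_def pi_add)
      qed
    next
      fix a :: 'a and x :: 'm and r assume x: "x \<in> T"
      have pT: "pi m x \<in> T" using pi_T[OF x] X_T by blast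
      have b: "(\<lambda>v. delta (lM (alg r) (pi m x), theta m a) v - delta (pi m x, alg r * theta m a) v) \<in> RT"
        by (rule tensor_rels.balanced[OF pT]) simp
      from rels_neg[OF b]
      show "(\<lambda>v. delta (F (a * alg r, x)) v - delta (F (a, lM (alg r) x)) v) \<in> RT"
        by (rule rels_eq) (simp add: fun_eq_iff F_def theta_alg pi_alg)
    qed
    define zs where "zs = map F w'"
    have mtop: "map F top' = top"
      unfolding top'_def map_map
      by (rule map_idI) (auto simp: F_def theta_theta pi_X[OF topX])
    have "cnt (top @ zs) \<in> RT"
      using pushRT by (simp add: push_cnt zs_def mtop)
    moreover have "cnt zs \<in> RT"
    proof (rule cnt_zeros)
      fix e assume "e \<in> set zs"
      then obtain e0 where "e0 \<in> set w" "e = F (- fst e0, snd e0)" unfolding zs_def w'_def by auto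
      then show "fst e = 0" using w(1) pi_low by (auto simp: F_def)
    qed
    ultimately have topRT: "cnt top \<in> RT"
      using tensor_rels.diff by (fastforce simp: cnt_append)
    have "Rv top = 0" by (rule R_kill[OF topRT])
    then have "Rv rest = 0" using R0 Rsplit by simp
    moreover have "\<forall>e\<in>set rest. \<exists>j<m. fst e \<in> X j" unfolding rest_def P_def by auto
    ultimately have restRT: "cnt rest \<in> RT" using Suc.IH by blast
    have "cnt q = (\<lambda>v. cnt rest v + cnt top v)"
      unfolding rest_def top_def by (rule cnt_filter)
    then show "cnt q \<in> RT" using rels_add[OF restRT topRT] by simp
  qed
qed

lemma inj: "set p \<subseteq> T \<times> UNIV \<Longrightarrow> Rv p = 0 \<Longrightarrow> cnt p \<in> RT"
proof -
  assume p: "set p \<subseteq> T \<times> UNIV" "Rv p = 0"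
  obtain q where q: "\<forall>e\<in>set q. \<exists>j. fst e \<in> X j" "(\<lambda>v. cnt p v - cnt q v) \<in> RT" "Rv p = Rv q"
    using homog[OF p(1)] by blast
  obtain m where "\<forall>e\<in>set q. \<exists>j<m. fst e \<in> X j" using bound[OF q(1)] by blast
  then have "cnt q \<in> RT" using inj_claim[of m] q(3) p(2) by simp
  from rels_add[OF q(2) this] show ?thesis by (rule rels_eq) (simp add: fun_eq_iff)
qed

end

theorem lemma7p11:
  fixes alg :: "'r::comm_ring_1 \<Rightarrow> 'a::ring_1"
    and GA :: "nat \<Rightarrow> 'a set"
    and lM :: "'a \<Rightarrow> 'm::ab_group_add \<Rightarrow> 'm"
    and rM :: "'m \<Rightarrow> 'a \<Rightarrow> 'm"
    and GM :: "nat \<Rightarrow> 'm set"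
    and X :: "nat \<Rightarrow> 'm set"
  assumes "graded_R_algebra alg GA"
    and "graded_bimodule alg GA lM rM GM"
    and "graded_submod alg lM GM X"
    and "tensor_mult_bij UNIV (hsums X UNIV) (\<lambda>r a. a * alg r) (\<lambda>r x. lM (alg r) x) lM"
    and "\<forall>m n a x b. x \<in> X m \<longrightarrow> b \<in> GA n \<longrightarrow>
           rM (lM a x) b - koszul_sign (m * n) (lM (a * b) x) \<in> left_span lM X {..<m}"
  shows "\<exists>Y. graded_submod alg lM GM Y \<and>
           tensor_mult_bij (hsums Y UNIV) UNIV (\<lambda>r y. lM (alg r) y) (\<lambda>r b. alg r * b) rM"
proof -
  interpret L7 alg GA lM rM GM X using assms by unfold_locales
  have "tensor_mult_bij (hsums X UNIV) UNIV (\<lambda>r y. lM (alg r) y) (\<lambda>r b. alg r * b) rM"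
    unfolding tensor_mult_bij_def tensor_zero_def using surj inj unfolding cnt_def by blast
  then show ?thesis using A3 by blast
qed

end
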